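(* Let $X$ be a real Banach space and $T:X\rightrightarrows X^*$ a maximal monotone operator. Then $$D(\mathcal{J}\delta_T)\subseteq\{(x,x^* )\in X\times X^*\;|\;\langle x,x^*\rangle\leq 0\},$$ i.e., every $(x,x^* )\in X\times X^*$ with $\sup_{(y,y^* )\in T}\big(\langle y,x^*\rangle+\langle x,y^*\rangle\big)<\infty$ satisfies $\langle x,x^*\rangle\leq0$.
   Context: $X$ is identified with its image in $X^{**}$. An operator $T:X\rightrightarrows X^*$ is a subset of $X\times X^*$; it is monotone if $\langle x-y,x^*-y^*\rangle\geq0$ for all $(x,x^* ),(y,y^* )\in T$, and maximal monotone if it is monotone and not properly contained in another monotone operator. $\delta_T$ is the indicator function of $T$ (0 on $T$, $+\infty$ elsewhere). For $h:X\times X^*\to\mathbb{R}\cup\{\pm\infty\}$, $h^*(x^*,x^{**})=\sup_{(y,y^* )}\langle y,x^*\rangle+\langle x^{**},y^*\rangle-h(y,y^* )$ on $X^*\times X^{**}$, and $(\mathcal{J}h)(x,x^* )=h^*(x^*,x)$; $D(f)=\{z\;|\;f(z)<\infty\}$. *)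

theory Defs
  imports "HOL-Analysis.Analysis"
begin

(* Real Banach space X = type 'a::banach; dual X* = 'a =>L real;
  bidual X** = ('a =>L real) =>L real. Pairing <x,x*> = blinfun_apply x* x. *)

definition monotone_op :: "('a::real_normed_vector \<times> ('a \<Rightarrow>\<^sub>L real)) set \<Rightarrow> bool" where
  "monotone_op T \<longleftrightarrow>
     (\<forall>x xs y ys. (x, xs) \<in> T \<longrightarrow> (y, ys) \<in> T \<longrightarrow> blinfun_apply (xs - ys) (x - y) \<ge> 0)"

definition maximal_monotone :: "('a::real_normed_vector \<times> ('a \<Rightarrow>\<^sub>L real)) set \<Rightarrow> bool" where
  "maximal_monotone T \<longleftrightarrow> monotone_op T \<and> (\<forall>S. monotone_op S \<longrightarrow> T \<subseteq> S \<longrightarrow> S = T)"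

definition indicator_op :: "('a \<times> 'b) set \<Rightarrow> ('a \<times> 'b) \<Rightarrow> ereal" where
  "indicator_op T z = (if z \<in> T then 0 else \<infinity>)"

definition canon :: "'a::real_normed_vector \<Rightarrow> ('a \<Rightarrow>\<^sub>L real) \<Rightarrow>\<^sub>L real" where
  "canon x = Blinfun (\<lambda>f. blinfun_apply f x)"

definition conj_op :: "('a::real_normed_vector \<times> ('a \<Rightarrow>\<^sub>L real) \<Rightarrow> ereal)
    \<Rightarrow> ('a \<Rightarrow>\<^sub>L real) \<times> (('a \<Rightarrow>\<^sub>L real) \<Rightarrow>\<^sub>L real) \<Rightarrow> ereal" where
  "conj_op h = (\<lambda>(xs, xss). SUP yz \<in> UNIV. ereal (blinfun_apply xs (fst yz) + blinfun_apply xss (snd yz)) - h yz)"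

definition J_op :: "('a::real_normed_vector \<times> ('a \<Rightarrow>\<^sub>L real) \<Rightarrow> ereal)
    \<Rightarrow> 'a \<times> ('a \<Rightarrow>\<^sub>L real) \<Rightarrow> ereal" where
  "J_op h = (\<lambda>(x, xs). conj_op h (xs, canon x))"

definition dom_fun :: "('c \<Rightarrow> ereal) \<Rightarrow> 'c set" where
  "dom_fun f = {z. f z < \<infinity>}"

end

theory Submission
  imports Defs
begin

lemma canon_apply: "blinfun_apply (canon x) f = blinfun_apply f x"
  unfolding canon_def
  by (simp add: bounded_linear_Blinfun_apply blinfun.bounded_linear_left)

lemma expand:
  "blinfun_apply ((as + l *\<^sub>R xs) - ys) ((a + l *\<^sub>R x) - y) =
   blinfun_apply (as - ys) (a - y) + l * (blinfun_apply xs a + blinfun_apply as x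
     - (blinfun_apply xs y + blinfun_apply ys x)) + l * l * blinfun_apply xs x"
  by (simp add: blinfun.diff_left blinfun.add_left blinfun.scaleR_left
      blinfun.diff_right blinfun.add_right blinfun.scaleR_right algebra_simps)

theorem theorem4p6:
  fixes T :: "('a::banach \<times> ('a \<Rightarrow>\<^sub>L real)) set"
  assumes "maximal_monotone T"
  shows "dom_fun (J_op (indicator_op T)) \<subseteq> {(x, xs). blinfun_apply xs x \<le> 0}"
proof
  fix z assume zin: "z \<in> dom_fun (J_op (indicator_op T))"
  obtain x xs where z: "z = (x, xs)" by force
  have mono: "monotone_op T" and max: "\<And>S. monotone_op S \<Longrightarrow> T \<subseteq> S \<Longrightarrow> S = T"
    using assms unfolding maximal_monotone_def by auto
  define S where "S = (SUP yz \<in> UNIV. ereal (blinfun_apply xs (fst yz) + blinfun_apply (canon x) (snd yz)) - indicator_op T yz)"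
  have Sfin: "S < \<infinity>" using zin unfolding S_def dom_fun_def J_op_def conj_op_def z by simp
  have le: "ereal (blinfun_apply xs y + blinfun_apply ys x) \<le> S" if "(y, ys) \<in> T" for y ys
  proof -
    have "ereal (blinfun_apply xs (fst (y,ys)) + blinfun_apply (canon x) (snd (y,ys))) - indicator_op T (y,ys) \<le> S"
      unfolding S_def by (rule SUP_upper) simp
    then show ?thesis using that by (simp add: indicator_op_def canon_apply)
  qed
  have Tne: "T \<noteq> {}"
  proof
    assume "T = {}"
    have "monotone_op {(0::'a, 0::'a \<Rightarrow>\<^sub>L real)}" unfolding monotone_op_def by simp
    from max[OF this] \<open>T = {}\<close> show False by simp
  qed
  then obtain a as where aT: "(a, as) \<in> T" by auto
  have "S \<noteq> -\<infinity>" using le[OF aT] by auto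
  then obtain M where SM: "S = ereal M" using Sfin by (cases S) auto
  have bound: "blinfun_apply xs y + blinfun_apply ys x \<le> M" if "(y, ys) \<in> T" for y ys
    using le[OF that] SM by simp
  define c where "c = blinfun_apply xs x"
  define K where "K = blinfun_apply xs a + blinfun_apply as x"
  have step: "l * c \<le> \<bar>M - K\<bar>" if lpos: "l > 0" for l
  proof (cases "(a + l *\<^sub>R x, as + l *\<^sub>R xs) \<in> T")
    case True
    from bound[OF this] have "K + 2 * l * c \<le> M"
      by (simp add: K_def c_def blinfun.add_left blinfun.add_right blinfun.scaleR_left blinfun.scaleR_right algebra_simps)
    then show ?thesis using lpos by (cases "c \<le> 0") (auto simp: mult_nonneg_nonneg)
  next
    case False
    have "\<not> monotone_op (insert (a + l *\<^sub>R x, as + l *\<^sub>R xs) T)"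
      using max[of "insert (a + l *\<^sub>R x, as + l *\<^sub>R xs) T"] False by blast
    then obtain y ys where yT: "(y, ys) \<in> T" and
      neg: "blinfun_apply ((as + l *\<^sub>R xs) - ys) ((a + l *\<^sub>R x) - y) < 0"
    proof -
      assume h: "\<And>y ys. (y, ys) \<in> T \<Longrightarrow> blinfun_apply ((as + l *\<^sub>R xs) - ys) ((a + l *\<^sub>R x) - y) < 0 \<Longrightarrow> thesis"
      assume nm: "\<not> monotone_op (insert (a + l *\<^sub>R x, as + l *\<^sub>R xs) T)"
      then obtain p ps q qs where pq: "(p, ps) \<in> insert (a + l *\<^sub>R x, as + l *\<^sub>R xs) T"
        "(q, qs) \<in> insert (a + l *\<^sub>R x, as + l *\<^sub>R xs) T" "blinfun_apply (ps - qs) (p - q) < 0"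
        unfolding monotone_op_def by (auto simp: not_le)
      have sym: "blinfun_apply (ps - qs) (p - q) = blinfun_apply (qs - ps) (q - p)"
        by (simp add: blinfun.diff_left blinfun.diff_right algebra_simps)
      show thesis using pq mono sym unfolding monotone_op_def
        by (auto intro: h simp: not_le) (metis not_le)+
    qed
    have m1: "blinfun_apply (as - ys) (a - y) \<ge> 0" using mono aT yT unfolding monotone_op_def by blast
    have m2: "blinfun_apply xs y + blinfun_apply ys x \<le> M" using bound[OF yT] .
    from neg m1 have "l * (K - (blinfun_apply xs y + blinfun_apply ys x)) + l * l * c < 0"
      unfolding expand K_def c_def by linarith
    moreover have "l * (M - K) \<ge> l * ((blinfun_apply xs y + blinfun_apply ys x) - K)"
      using m2 lpos by (intro mult_left_mono) auto
    ultimately have "l * (l * c) < l * (M - K)" by (simp add: algebra_simps)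
    then have "l * c < M - K" using lpos by simp
    then show ?thesis by simp
  qed
  show "z \<in> {(x, xs). blinfun_apply xs x \<le> 0}"
  proof (rule ccontr)
    assume "z \<notin> {(x, xs). blinfun_apply xs x \<le> 0}"
    then have cpos: "c > 0" using z c_def by simp
    define l where "l = (\<bar>M - K\<bar> + 1) / c"
    have "l > 0" using cpos by (simp add: l_def add_pos_nonneg)
    from step[OF this] cpos show False by (simp add: l_def)
  qed
qed

end
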